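(* Let $k$ be a field of characteristic zero, $m$ a positive integer and $i\in\mathbb{Z}_{\geqslant 0}$. Let $[x^m]$ be the differential ideal of $k\{x\}$ generated by $x^m$, and let $x_i$ be the $i$-th derivative of $x$. Then the minimal positive integer $j$ such that $x_i^j\in[x^m]$ equals $(i+1)m - i$.
   Context: $k\{x\}$ denotes the differential polynomial algebra in one indeterminate: the polynomial algebra $k[x_0,x_1,x_2,\dots]$ in algebraically independent indeterminates (with $x = x_0$) equipped with the $k$-linear derivation satisfying $x_n' = x_{n+1}$. A differential ideal is an ideal $I$ with $I'\subseteq I$; $[x^m]$ is the smallest differential ideal containing $x^m$. *)

theory Defs
  imports "HOL-Library.Poly_Mapping"
begin

text \<open>The differential polynomial algebra k{x} in one indeterminate: polynomials in the
  countably many indeterminates x_0, x_1, x_2, ... (x = x_0).\<close>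

type_synonym 'a dpoly = "(nat \<Rightarrow>\<^sub>0 nat) \<Rightarrow>\<^sub>0 'a"

definition dvar :: "nat \<Rightarrow> 'a::comm_ring_1 dpoly" where
  "dvar n = Poly_Mapping.single (Poly_Mapping.single n 1) 1"

text \<open>The k-linear derivation with x_n' = x_(n+1), extended by the Leibniz rule:
  (c * prod x_n^(e_n))' = sum_n c * e_n * x_n^(e_n - 1) * x_(n+1) * prod_(l /= n) x_l^(e_l).\<close>

definition dderiv :: "'a::comm_ring_1 dpoly \<Rightarrow> 'a dpoly" where
  "dderiv p = (\<Sum>mon\<in>Poly_Mapping.keys p. \<Sum>n\<in>Poly_Mapping.keys mon.
      Poly_Mapping.single (mon - Poly_Mapping.single n 1 + Poly_Mapping.single (Suc n) 1)
        (Poly_Mapping.lookup p mon * of_nat (Poly_Mapping.lookup mon n)))"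

definition is_diff_ideal :: "'a::comm_ring_1 dpoly set \<Rightarrow> bool" where
  "is_diff_ideal I \<longleftrightarrow> 0 \<in> I \<and> (\<forall>p\<in>I. \<forall>q\<in>I. p + q \<in> I)
     \<and> (\<forall>p\<in>I. \<forall>r. r * p \<in> I) \<and> (\<forall>p\<in>I. dderiv p \<in> I)"

definition diff_ideal_gen :: "'a::comm_ring_1 dpoly set \<Rightarrow> 'a dpoly set" where
  "diff_ideal_gen S = \<Inter>{I. is_diff_ideal I \<and> S \<subseteq> I}"

end

theory Submission
  imports Defs "Jordan_Normal_Form.Determinant"
begin



lemma sum_single_pm:
  "p = (\<Sum>k\<in>Poly_Mapping.keys p. Poly_Mapping.single k (Poly_Mapping.lookup p k))"
proof (rule poly_mapping_eqI)
  fix k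
  show "Poly_Mapping.lookup p k = Poly_Mapping.lookup (\<Sum>k\<in>Poly_Mapping.keys p. Poly_Mapping.single k (Poly_Mapping.lookup p k)) k"
    by (cases "k \<in> Poly_Mapping.keys p")
       (auto simp: lookup_sum lookup_single when_def in_keys_iff sum.delta)
qed

lemma pm_induct[case_names zero add single]:
  fixes p :: "'a \<Rightarrow>\<^sub>0 'b::comm_monoid_add"
  assumes "P 0" "\<And>p q. P p \<Longrightarrow> P q \<Longrightarrow> P (p + q)" "\<And>k v. P (Poly_Mapping.single k v)"
  shows "P p"
proof -
  have "\<And>A f. finite A \<Longrightarrow> P (\<Sum>k\<in>A. Poly_Mapping.single k (f k))"
  proof -
    fix A :: "'a set" and f
    show "finite A \<Longrightarrow> P (\<Sum>k\<in>A. Poly_Mapping.single k (f k))"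
      by (induction A rule: finite_induct) (auto intro: assms)
  qed
  then show ?thesis by (subst sum_single_pm) simp
qed

definition Dg :: "(nat \<Rightarrow> (nat \<Rightarrow>\<^sub>0 nat)) \<Rightarrow> (nat \<Rightarrow> 'a) \<Rightarrow> 'a::comm_ring_1 dpoly \<Rightarrow> 'a dpoly" where
  "Dg s w p = (\<Sum>mon\<in>Poly_Mapping.keys p. \<Sum>n\<in>Poly_Mapping.keys mon.
      Poly_Mapping.single (mon - Poly_Mapping.single n 1 + s n)
        (Poly_Mapping.lookup p mon * of_nat (Poly_Mapping.lookup mon n) * w n))"

lemma dderiv_Dg: "dderiv = Dg (\<lambda>n. Poly_Mapping.single (Suc n) 1) (\<lambda>_. 1)"
  by (rule ext) (simp add: dderiv_def Dg_def)

lemma Dg_add: "Dg s w (p + q) = Dg s w p + Dg s w q"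
  unfolding Dg_def
  by (rule setsum_keys_plus_distrib) (auto simp: distrib_right single_add sum.distrib)

lemma Dg_zero[simp]: "Dg s w 0 = 0"
  by (simp add: Dg_def)

lemma Dg_single: "Dg s w (Poly_Mapping.single e c) = (\<Sum>n\<in>Poly_Mapping.keys e.
      Poly_Mapping.single (e - Poly_Mapping.single n 1 + s n) (c * of_nat (Poly_Mapping.lookup e n) * w n))"
  by (cases "c = 0") (simp_all add: Dg_def)

lemma Dg_sum: "Dg s w (sum f A) = (\<Sum>a\<in>A. Dg s w (f a))"
  by (induction A rule: infinite_finite_induct) (auto simp: Dg_add)

lemma Dg_uminus: "Dg s w (- p) = - Dg s w p"
proof -
  have "Dg s w p + Dg s w (-p) = 0" using Dg_add[of s w p "-p"] by simp
  then show ?thesis by (simp add: add_eq_0_iff)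
qed

lemma Dg_diff: "Dg s w (p - q) = Dg s w p - Dg s w q"
  using Dg_add[of s w p "-q"] by (simp add: Dg_uminus)

lemma keys_add_nat: "Poly_Mapping.keys (e + f :: nat \<Rightarrow>\<^sub>0 nat) = Poly_Mapping.keys e \<union> Poly_Mapping.keys f"
  by (auto simp: in_keys_iff lookup_add)

lemma sum_keys_extend:
  fixes e :: "nat \<Rightarrow>\<^sub>0 nat"
  assumes "finite K" "Poly_Mapping.keys e \<subseteq> K" "\<And>n. n \<in> K \<Longrightarrow> Poly_Mapping.lookup e n = 0 \<Longrightarrow> g n = 0"
  shows "(\<Sum>n\<in>Poly_Mapping.keys e. g n) = (\<Sum>n\<in>K. g n)"
  by (rule sum.mono_neutral_left) (use assms in \<open>auto simp: in_keys_iff\<close>)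

lemma mon_shift_add:
  fixes e f :: "nat \<Rightarrow>\<^sub>0 nat"
  assumes "Poly_Mapping.lookup e n \<noteq> 0"
  shows "e + f - Poly_Mapping.single n 1 + t = (e - Poly_Mapping.single n 1 + t) + f"
  by (rule poly_mapping_eqI) (use assms in \<open>auto simp: lookup_add lookup_minus lookup_single when_def\<close>)

lemma Dg_mult_single:
  "Dg s w (Poly_Mapping.single e a * Poly_Mapping.single f b) =
   Dg s w (Poly_Mapping.single e a) * Poly_Mapping.single f b + Poly_Mapping.single e a * Dg s w (Poly_Mapping.single f b)"
proof -
  let ?K = "Poly_Mapping.keys e \<union> Poly_Mapping.keys f"
  let ?d = "\<lambda>n. Poly_Mapping.single n (1::nat)"
  have fK: "finite ?K" by simp
  have "Dg s w (Poly_Mapping.single e a * Poly_Mapping.single f b) =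
     (\<Sum>n\<in>?K. Poly_Mapping.single (e + f - ?d n + s n) (a * b * of_nat (Poly_Mapping.lookup (e+f) n) * w n))"
    unfolding mult_single Dg_single
    by (rule sum_keys_extend) (auto simp: keys_add_nat lookup_add)
  also have "\<dots> = (\<Sum>n\<in>?K. Poly_Mapping.single (e - ?d n + s n) (a * of_nat (Poly_Mapping.lookup e n) * w n) * Poly_Mapping.single f b
        + Poly_Mapping.single e a * Poly_Mapping.single (f - ?d n + s n) (b * of_nat (Poly_Mapping.lookup f n) * w n))"
  proof (rule sum.cong[OF refl])
    fix n
    have A: "Poly_Mapping.single (e + f - ?d n + s n) (a * b * of_nat (Poly_Mapping.lookup e n) * w n)
       = Poly_Mapping.single (e - ?d n + s n) (a * of_nat (Poly_Mapping.lookup e n) * w n) * Poly_Mapping.single f b"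
      using mon_shift_add[of e n f "s n"]
      by (cases "Poly_Mapping.lookup e n = 0") (auto simp: mult_single mult_ac add.commute)
    have B: "Poly_Mapping.single (e + f - ?d n + s n) (a * b * of_nat (Poly_Mapping.lookup f n) * w n)
       = Poly_Mapping.single e a * Poly_Mapping.single (f - ?d n + s n) (b * of_nat (Poly_Mapping.lookup f n) * w n)"
      using mon_shift_add[of f n e "s n"]
      by (cases "Poly_Mapping.lookup f n = 0") (auto simp: mult_single mult_ac add.commute)
    show "Poly_Mapping.single (e + f - ?d n + s n) (a * b * of_nat (Poly_Mapping.lookup (e+f) n) * w n) = 
      Poly_Mapping.single (e - ?d n + s n) (a * of_nat (Poly_Mapping.lookup e n) * w n) * Poly_Mapping.single f b
        + Poly_Mapping.single e a * Poly_Mapping.single (f - ?d n + s n) (b * of_nat (Poly_Mapping.lookup f n) * w n)"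
      unfolding lookup_add of_nat_add distrib_left distrib_right single_add A B ..
  qed
  also have "\<dots> = Dg s w (Poly_Mapping.single e a) * Poly_Mapping.single f b + Poly_Mapping.single e a * Dg s w (Poly_Mapping.single f b)"
  proof -
    have E1: "(\<Sum>n\<in>Poly_Mapping.keys e. Poly_Mapping.single (e - ?d n + s n) (a * of_nat (Poly_Mapping.lookup e n) * w n) * Poly_Mapping.single f b)
      = (\<Sum>n\<in>?K. Poly_Mapping.single (e - ?d n + s n) (a * of_nat (Poly_Mapping.lookup e n) * w n) * Poly_Mapping.single f b)"
      by (rule sum_keys_extend) auto
    have E2: "(\<Sum>n\<in>Poly_Mapping.keys f. Poly_Mapping.single e a * Poly_Mapping.single (f - ?d n + s n) (b * of_nat (Poly_Mapping.lookup f n) * w n))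
      = (\<Sum>n\<in>?K. Poly_Mapping.single e a * Poly_Mapping.single (f - ?d n + s n) (b * of_nat (Poly_Mapping.lookup f n) * w n))"
      by (rule sum_keys_extend) auto
    show ?thesis
      unfolding Dg_single sum.distrib sum_distrib_left sum_distrib_right E1 E2 ..
  qed
  finally show ?thesis .
qed

lemma Dg_mult: "Dg s w (p * q) = Dg s w p * q + p * Dg s w q"
proof (induction p rule: pm_induct)
  case zero then show ?case by simp
next
  case (add p1 p2) then show ?case by (simp add: distrib_right distrib_left Dg_add)
next
  case (single e a)
  show ?case
  proof (induction q rule: pm_induct)
    case zero then show ?case by simp
  next
    case (add q1 q2) then show ?case by (simp add: distrib_right distrib_left Dg_add)
  next
    case (single f b) then show ?case by (rule Dg_mult_single)
  qed
qed

lemma Dg_const[simp]: "Dg s w (Poly_Mapping.single 0 c) = 0"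
  by (simp add: Dg_single)

lemma Dg_power: "Dg s w (p ^ Suc k) = of_nat (Suc k) * p ^ k * Dg s w p"
  by (induction k) (simp_all add: Dg_mult algebra_simps)




abbreviation "dd n \<equiv> Poly_Mapping.single n (1::nat)"
abbreviation "XX e \<equiv> Poly_Mapping.single e (1::'a::comm_ring_1)"

definition msum :: "(nat \<Rightarrow> nat) \<Rightarrow> (nat \<Rightarrow>\<^sub>0 nat) \<Rightarrow> nat" where
  "msum h e = (\<Sum>k\<in>Poly_Mapping.keys e. h k * Poly_Mapping.lookup e k)"

abbreviation "mdeg \<equiv> msum (\<lambda>_. 1)"
abbreviation "mwt \<equiv> msum (\<lambda>k. k)"
abbreviation "mQ \<equiv> msum (\<lambda>k. k * k)"

lemma msum_add: "msum h (e + f) = msum h e + msum h f"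
  unfolding msum_def by (rule setsum_keys_plus_distrib) (auto simp: distrib_left)

lemma msum_single[simp]: "msum h (Poly_Mapping.single k n) = h k * n"
  by (cases "n = 0") (auto simp: msum_def)

lemma msum_zero[simp]: "msum h 0 = 0"
  by (simp add: msum_def)

lemma msum_extend:
  assumes "finite K" "Poly_Mapping.keys e \<subseteq> K"
  shows "msum h e = (\<Sum>k\<in>K. h k * Poly_Mapping.lookup e k)"
  unfolding msum_def by (rule sum.mono_neutral_left) (use assms in \<open>auto simp: in_keys_iff\<close>)

lemma split_dd:
  assumes "Poly_Mapping.lookup e n \<noteq> 0"
  shows "e = (e - dd n) + dd n"
  by (rule poly_mapping_eqI) (use assms in \<open>auto simp: lookup_add lookup_minus lookup_single when_def\<close>)

lemma msum_shift:
  assumes "Poly_Mapping.lookup e n \<noteq> 0"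
  shows "msum h (e - dd n + dd k) + h n = msum h e + h k"
proof -
  have "msum h e = msum h ((e - dd n) + dd n)" using split_dd[OF assms] by simp
  also have "\<dots> = msum h (e - dd n) + h n" by (simp only: msum_add msum_single mult_1_right)
  finally have "msum h e = msum h (e - dd n) + h n" .
  then show ?thesis by (simp add: msum_add)
qed

lemma dvar_power: "(dvar n :: 'a::comm_ring_1 dpoly) ^ k = XX (Poly_Mapping.single n k)"
  by (induction k) (simp_all add: dvar_def mult_single single_add[symmetric])

lemma mwt0:
  assumes "mwt T = 0"
  shows "T = Poly_Mapping.single 0 (mdeg T)"
proof -
  have K: "Poly_Mapping.keys T \<subseteq> {0}"
  proof
    fix k assume k: "k \<in> Poly_Mapping.keys T"
    have "k * Poly_Mapping.lookup T k \<le> mwt T"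
      unfolding msum_def by (rule member_le_sum) (use k in auto)
    with k assms show "k \<in> {0}" by (auto simp: in_keys_iff)
  qed
  have "mdeg T = Poly_Mapping.lookup T 0"
    using msum_extend[of "{0}" T "\<lambda>_. 1"] K by simp
  show ?thesis
    by (rule poly_mapping_eqI) (use K \<open>mdeg T = _\<close> in \<open>auto simp: lookup_single when_def in_keys_iff\<close>)
qed

context
  fixes I :: "'a::field_char_0 dpoly set"
  assumes I: "is_diff_ideal I"
begin

lemma I0: "0 \<in> I" using I by (simp add: is_diff_ideal_def)
lemma Iadd: "p \<in> I \<Longrightarrow> q \<in> I \<Longrightarrow> p + q \<in> I" using I by (simp add: is_diff_ideal_def)
lemma Imult: "p \<in> I \<Longrightarrow> r * p \<in> I" using I by (simp add: is_diff_ideal_def)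
lemma Ider: "p \<in> I \<Longrightarrow> dderiv p \<in> I" using I by (simp add: is_diff_ideal_def)
lemma Idiff: "p \<in> I \<Longrightarrow> q \<in> I \<Longrightarrow> p - q \<in> I"
  using Iadd[of p "(-1) * q"] Imult[of q "-1"] by simp
lemma Isum: "(\<And>a. a \<in> A \<Longrightarrow> f a \<in> I) \<Longrightarrow> sum f A \<in> I"
  by (induction A rule: infinite_finite_induct) (auto intro: I0 Iadd)
lemma Iders: "p \<in> I \<Longrightarrow> (dderiv ^^ n) p \<in> I"
  by (induction n) (auto intro: Ider)

end

section \<open>Derivatives of x^m\<close>

lemma lookup_dderiv:
  "Poly_Mapping.lookup (dderiv p) T = (\<Sum>mon\<in>Poly_Mapping.keys p. \<Sum>k\<in>Poly_Mapping.keys mon.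
     (Poly_Mapping.lookup p mon * of_nat (Poly_Mapping.lookup mon k) when mon - dd k + dd (Suc k) = T))"
  by (simp add: dderiv_def lookup_sum lookup_single)

lemma keys_dderiv:
  assumes "T \<in> Poly_Mapping.keys (dderiv p)"
  shows "\<exists>mon\<in>Poly_Mapping.keys p. \<exists>k\<in>Poly_Mapping.keys mon. T = mon - dd k + dd (Suc k)"
proof (rule ccontr)
  assume "\<not> ?thesis"
  then have "Poly_Mapping.lookup (dderiv p) T = 0"
    unfolding lookup_dderiv by (intro sum.neutral ballI) (auto simp: when_def)
  with assms show False by (simp add: in_keys_iff)
qed

definition gg :: "nat \<Rightarrow> nat \<Rightarrow> 'a::comm_ring_1 dpoly" where
  "gg m n = (dderiv ^^ n) (XX (Poly_Mapping.single 0 m))"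

lemma gg_Suc: "gg m (Suc n) = dderiv (gg m n)" by (simp add: gg_def)

lemma gg_keys: "T \<in> Poly_Mapping.keys (gg m n :: 'a::comm_ring_1 dpoly) \<Longrightarrow> mdeg T = m \<and> mwt T = n"
proof (induction n arbitrary: T)
  case 0 then show ?case by (simp add: gg_def split: if_splits)
next
  case (Suc n)
  have "T \<in> Poly_Mapping.keys (dderiv (gg m n :: 'a dpoly))" using Suc.prems by (simp add: gg_def)
  from keys_dderiv[OF this] obtain mon k where mon: "mon \<in> Poly_Mapping.keys (gg m n :: 'a dpoly)" and k: "k \<in> Poly_Mapping.keys mon"
    and T: "T = mon - dd k + dd (Suc k)" by blast
  from Suc.IH[OF mon] have "mdeg mon = m" "mwt mon = n" by auto
  moreover have "Poly_Mapping.lookup mon k \<noteq> 0" using k by (simp add: in_keys_iff)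
  ultimately show ?case using msum_shift[of mon k "\<lambda>_. 1" "Suc k"] msum_shift[of mon k "\<lambda>k. k" "Suc k"] T
    by simp
qed

lemma of_nat_when: "of_nat (x when P) = (of_nat x when P)"
  by (simp add: when_def)

lemma gg_coef:
  "\<exists>c. (\<forall>T. Poly_Mapping.lookup (gg m n :: 'a::field_char_0 dpoly) T = of_nat (c T)) \<and>
       (\<forall>T. mdeg T = m \<and> mwt T = n \<longrightarrow> 0 < c T)"
proof (induction n)
  case 0
  show ?case
  proof (intro exI conjI allI impI)
    fix T
    show "Poly_Mapping.lookup (gg m 0 :: 'a dpoly) T = of_nat (if T = Poly_Mapping.single 0 m then 1 else 0)"
      by (auto simp: gg_def lookup_single when_def)
    assume "mdeg T = m \<and> mwt T = 0"
    then show "0 < (if T = Poly_Mapping.single 0 m then 1 else 0 :: nat)"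
      using mwt0[of T] by auto
  qed
next
  case (Suc n)
  then obtain c where c: "\<And>T. Poly_Mapping.lookup (gg m n :: 'a dpoly) T = of_nat (c T)"
    and cpos: "\<And>T. mdeg T = m \<Longrightarrow> mwt T = n \<Longrightarrow> 0 < c T" by blast
  define c' where "c' T = (\<Sum>mon\<in>Poly_Mapping.keys (gg m n :: 'a dpoly). \<Sum>k\<in>Poly_Mapping.keys mon.
     (c mon * Poly_Mapping.lookup mon k when mon - dd k + dd (Suc k) = T))" for T
  show ?case
  proof (intro exI conjI allI impI)
    fix T
    show "Poly_Mapping.lookup (gg m (Suc n) :: 'a dpoly) T = of_nat (c' T)"
      by (simp add: gg_Suc lookup_dderiv c'_def c of_nat_when)
    assume T: "mdeg T = m \<and> mwt T = Suc n"
    have "\<exists>j\<in>Poly_Mapping.keys T. 0 < j"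
    proof (rule ccontr)
      assume "\<not> ?thesis"
      then have "mwt T = 0" unfolding msum_def by (intro sum.neutral) auto
      with T show False by simp
    qed
    then obtain j where j: "j \<in> Poly_Mapping.keys T" "0 < j" by blast
    define T' where "T' = T - dd j + dd (j - 1)"
    have Tj: "Poly_Mapping.lookup T j \<noteq> 0" using j by (simp add: in_keys_iff)
    have "mdeg T' = m" using msum_shift[OF Tj, of "\<lambda>_. 1" "j - 1"] T by (simp add: T'_def)
    moreover have "mwt T' = n" using msum_shift[OF Tj, of "\<lambda>k. k" "j - 1"] T j by (simp add: T'_def)
    ultimately have pos: "0 < c T'" by (rule cpos)
    then have T'k: "T' \<in> Poly_Mapping.keys (gg m n :: 'a dpoly)" by (simp add: in_keys_iff c)
    have j1: "Poly_Mapping.lookup T' (j - 1) \<noteq> 0"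
      by (simp add: T'_def lookup_add lookup_minus lookup_single)
    then have j1k: "j - 1 \<in> Poly_Mapping.keys T'" by (simp add: in_keys_iff)
    have bk: "T' - dd (j - 1) + dd (Suc (j - 1)) = T"
      by (rule poly_mapping_eqI) (use j Tj in \<open>auto simp: T'_def lookup_add lookup_minus lookup_single when_def\<close>)
    have "0 < c T' * Poly_Mapping.lookup T' (j - 1)" using pos j1 by simp
    also have "\<dots> = (c T' * Poly_Mapping.lookup T' (j - 1) when T' - dd (j - 1) + dd (Suc (j - 1)) = T)"
      using bk by simp
    also have "\<dots> \<le> (\<Sum>k\<in>Poly_Mapping.keys T'. (c T' * Poly_Mapping.lookup T' k when T' - dd k + dd (Suc k) = T))"
      by (rule member_le_sum[OF j1k, where f = "\<lambda>k. (c T' * Poly_Mapping.lookup T' k when T' - dd k + dd (Suc k) = T)"]) auto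
    also have "\<dots> \<le> c' T"
      unfolding c'_def by (rule member_le_sum[OF T'k]) auto
    finally show "0 < c' T" .
  qed
qed


section \<open>Combinatorics of monomials\<close>

lemma int_msum: "int (msum h e) = (\<Sum>k\<in>Poly_Mapping.keys e. int (h k) * int (Poly_Mapping.lookup e k))"
  by (simp add: msum_def)

lemma sum_pairs: "(\<Sum>k<2*n. f k) = (\<Sum>j<n::nat. f (2*j) + f (2*j+1))"
  by (induction n) (simp_all add: sum.distrib algebra_simps)

lemma sum_lin: "2 * (\<Sum>j<n. int j) = int n * (int n - 1)"
  by (induction n) (simp_all add: algebra_simps)

lemma gordon:
  fixes M :: "nat \<Rightarrow>\<^sub>0 nat"
  assumes w: "\<And>b. Poly_Mapping.lookup M b + Poly_Mapping.lookup M (Suc b) < m"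
    and d: "mdeg M = (i+1)*(m-1)+1"
  shows "i * mdeg M < mwt M"
proof -
  define K where "K = Suc (Max (insert (2*i+1) (Poly_Mapping.keys M)))"
  have fin: "finite (insert (2*i+1) (Poly_Mapping.keys M))" by simp
  have KM: "Poly_Mapping.keys M \<subseteq> {..<K}"
    using Max_ge[OF fin] by (force simp: K_def less_Suc_eq_le)
  have K2: "2*(i+1) \<le> K" using Max_ge[OF fin, of "2*i+1"] by (simp add: K_def)
  define f where "f k = (int k - (2*int i+1)) * int (Poly_Mapping.lookup M k)" for k
  have degK: "int (mdeg M) = (\<Sum>k<K. int (Poly_Mapping.lookup M k))"
    using msum_extend[OF _ KM, of "\<lambda>_. 1"] by simp
  have wtK: "int (mwt M) = (\<Sum>k<K. int k * int (Poly_Mapping.lookup M k))"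
    using msum_extend[OF _ KM, of "\<lambda>k. k"] by simp
  have "(\<Sum>k<K. f k) = (\<Sum>k<K. int k * int (Poly_Mapping.lookup M k) - (2*int i+1) * int (Poly_Mapping.lookup M k))"
    unfolding f_def by (rule sum.cong) (simp_all add: left_diff_distrib)
  also have "\<dots> = (\<Sum>k<K. int k * int (Poly_Mapping.lookup M k)) - (2*int i+1) * (\<Sum>k<K. int (Poly_Mapping.lookup M k))"
    by (simp only: sum_subtractf sum_distrib_left)
  finally have "int (mwt M) - (2*int i+1) * int (mdeg M) = (\<Sum>k<K. f k)"
    unfolding degK wtK by simp
  also have "(\<Sum>k<K. f k) = (\<Sum>k<2*(i+1). f k) + (\<Sum>k\<in>{2*(i+1)..<K}. f k)"
  proof -
    have e: "{..<K} = {..<2*(i+1)} \<union> {2*(i+1)..<K}" using K2 by auto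
    show ?thesis unfolding e by (rule sum.union_disjoint) auto
  qed
  also have "(\<Sum>k\<in>{2*(i+1)..<K}. f k) \<ge> 0"
    by (rule sum_nonneg) (auto simp: f_def)
  moreover have "(\<Sum>k<2*(i+1). f k) \<ge> (\<Sum>j<i+1. (2*int j - 2*int i - 1) * int (m - 1))"
    unfolding sum_pairs
  proof (rule sum_mono)
    fix j assume j: "j \<in> {..<i+1}"
    have le: "int (Poly_Mapping.lookup M (2*j)) + int (Poly_Mapping.lookup M (Suc (2*j))) \<le> int (m - 1)"
      using w[of "2*j"] by linarith
    have neg: "2*int j - 2*int i - 1 < 0" using j by auto
    have "f (2*j) + f (2*j+1) = (2*int j - 2*int i - 1) * (int (Poly_Mapping.lookup M (2*j)) + int (Poly_Mapping.lookup M (Suc (2*j)))) + int (Poly_Mapping.lookup M (Suc (2*j)))"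
      by (simp add: f_def algebra_simps)
    then have "f (2*j) + f (2*j+1) \<ge> (2*int j - 2*int i - 1) * (int (Poly_Mapping.lookup M (2*j)) + int (Poly_Mapping.lookup M (Suc (2*j))))"
      by linarith
    moreover have "(2*int j - 2*int i - 1) * (int (Poly_Mapping.lookup M (2*j)) + int (Poly_Mapping.lookup M (Suc (2*j))))
        \<ge> (2*int j - 2*int i - 1) * int (m - 1)"
      using mult_left_mono_neg[OF le, of "2*int j - 2*int i - 1"] neg by simp
    ultimately show "(2*int j - 2*int i - 1) * int (m - 1) \<le> f (2*j) + f (2*j+1)" by linarith
  qed
  moreover have "(\<Sum>j<i+1. (2*int j - 2*int i - 1) * int (m - 1)) = - ((int i + 1) * (int i + 1) * int (m - 1))"
  proof -
    have "(\<Sum>j<i+1. (2*int j - 2*int i - 1) * int (m - 1)) = (\<Sum>j<i+1. (2*int j - (2*int i + 1))) * int (m - 1)"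
      by (simp only: sum_distrib_right[symmetric]) (simp add: algebra_simps)
    also have "(\<Sum>j<i+1. (2*int j - (2*int i + 1))) = 2 * (\<Sum>j<i+1. int j) - (2*int i + 1) * (int i + 1)"
      by (simp only: sum_subtractf sum_distrib_left[symmetric]) simp
    finally have "(\<Sum>j<i+1. (2*int j - 2*int i - 1) * int (m - 1)) = (2 * (\<Sum>j<i+1. int j) - (2*int i + 1) * (int i + 1)) * int (m - 1)" .
    also have "\<dots> = - ((int i + 1) * (int i + 1) * int (m - 1))"
      unfolding sum_lin by (simp add: algebra_simps power2_eq_square)
    finally show ?thesis .
  qed
  ultimately have "int (mwt M) \<ge> (2*int i+1) * int (mdeg M) - ((int i + 1) * (int i + 1)) * int (m - 1)"
    by linarith
  moreover have "(2*int i+1) * int (mdeg M) - ((int i + 1) * (int i + 1)) * int (m - 1) = int i * int (mdeg M) + int i + 1"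
  proof -
    have dd: "int (mdeg M) = (int i + 1) * int (m - 1) + 1"
      unfolding d by (simp only: of_nat_add of_nat_mult of_nat_1)
    show ?thesis unfolding dd by (simp add: algebra_simps)
  qed
  ultimately have "int (mwt M) > int i * int (mdeg M)" by linarith
  then show ?thesis by (simp add: of_nat_mult[symmetric] del: of_nat_mult)
qed

lemma msum_two: "b \<noteq> c \<Longrightarrow> msum h (Poly_Mapping.single b p + Poly_Mapping.single c q) = h b * p + h c * q"
  by (simp add: msum_add)

lemma qmin:
  fixes T :: "nat \<Rightarrow>\<^sub>0 nat" and b p q :: nat
  defines "S \<equiv> Poly_Mapping.single b p + Poly_Mapping.single (Suc b) q"
  assumes dT: "mdeg T = p + q" and wT: "mwt T = b * p + Suc b * q" and ne: "T \<noteq> S"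
  shows "mQ S < mQ T"
proof -
  define f where "f k = (int k - int b) * (int k - int b - 1)" for k
  have fnn: "f k \<ge> 0" for k
  proof (cases "k \<le> b")
    case True then show ?thesis by (simp add: f_def mult_nonpos_nonpos)
  next
    case False then show ?thesis by (simp add: f_def)
  qed
  let ?t = "\<lambda>k. int (Poly_Mapping.lookup T k)"
  have "(\<Sum>k\<in>Poly_Mapping.keys T. f k * ?t k)
      = (\<Sum>k\<in>Poly_Mapping.keys T. int k * int k * ?t k - (2*int b+1) * (int k * ?t k) + int b * (int b + 1) * ?t k)"
    by (rule sum.cong) (simp_all add: f_def algebra_simps)
  also have "\<dots> = (\<Sum>k\<in>Poly_Mapping.keys T. int k * int k * ?t k) - (2*int b+1) * (\<Sum>k\<in>Poly_Mapping.keys T. int k * ?t k)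
      + int b * (int b + 1) * (\<Sum>k\<in>Poly_Mapping.keys T. ?t k)"
    by (simp only: sum.distrib sum_subtractf sum_distrib_left)
  also have "\<dots> = int (mQ T) - (2*int b+1) * int (mwt T) + int b * (int b + 1) * int (mdeg T)"
    unfolding int_msum by simp
  finally have A: "(\<Sum>k\<in>Poly_Mapping.keys T. f k * ?t k)
      = int (mQ T) - (2*int b+1) * int (mwt T) + int b * (int b + 1) * int (mdeg T)" .
  have QS: "int (mQ S) = int b * int b * int p + (int b + 1) * (int b + 1) * int q"
    unfolding S_def by (simp add: msum_add algebra_simps)
  have "int (mQ T) - int (mQ S) = (\<Sum>k\<in>Poly_Mapping.keys T. f k * int (Poly_Mapping.lookup T k))"
    unfolding A QS dT wT by (simp add: algebra_simps)
  moreover have "(\<Sum>k\<in>Poly_Mapping.keys T. f k * int (Poly_Mapping.lookup T k)) \<noteq> 0"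
  proof
    assume z: "(\<Sum>k\<in>Poly_Mapping.keys T. f k * int (Poly_Mapping.lookup T k)) = 0"
    have all0: "\<forall>k\<in>Poly_Mapping.keys T. f k * int (Poly_Mapping.lookup T k) = 0"
      using sum_nonneg_eq_0_iff[where A="Poly_Mapping.keys T" and f="\<lambda>k. f k * int (Poly_Mapping.lookup T k)"] z fnn
      by simp
    have kb: "k = b \<or> k = Suc b" if "k \<in> Poly_Mapping.keys T" for k
    proof -
      from all0 that have "f k = 0" by (auto simp: in_keys_iff)
      then show ?thesis by (auto simp: f_def)
    qed
    define x where "x = Poly_Mapping.lookup T b"
    define y where "y = Poly_Mapping.lookup T (Suc b)"
    have Tf: "T = Poly_Mapping.single b x + Poly_Mapping.single (Suc b) y"
    proof (rule poly_mapping_eqI)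
      fix k
      show "Poly_Mapping.lookup T k = Poly_Mapping.lookup (Poly_Mapping.single b x + Poly_Mapping.single (Suc b) y) k"
        using kb[of k] by (cases "k \<in> Poly_Mapping.keys T") (auto simp: lookup_add lookup_single when_def x_def y_def in_keys_iff)
    qed
    have "x + y = p + q" using dT unfolding Tf by (simp add: msum_add)
    moreover have "b * x + Suc b * y = b * p + Suc b * q" using wT unfolding Tf by (simp add: msum_add)
    then have e2: "b * x + b * y + y = b * p + b * q + q" by (simp add: algebra_simps)
    have e1: "b * x + b * y = b * p + b * q" using \<open>x + y = p + q\<close> by (metis distrib_left)
    from e1 e2 have "y = q" by linarith
    with \<open>x + y = p + q\<close> have "x = p" by simp
    with \<open>y = q\<close> Tf ne show False by (simp add: S_def)
  qed
  moreover have "(\<Sum>k\<in>Poly_Mapping.keys T. f k * int (Poly_Mapping.lookup T k)) \<ge> 0"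
    by (rule sum_nonneg) (simp add: fnn)
  ultimately show ?thesis by linarith
qed

lemma qbound:
  fixes M :: "nat \<Rightarrow>\<^sub>0 nat"
  shows "mQ M \<le> mwt M * mwt M"
proof -
  have "mQ M = (\<Sum>k\<in>Poly_Mapping.keys M. k * k * Poly_Mapping.lookup M k)" by (simp add: msum_def)
  also have "\<dots> \<le> (\<Sum>k\<in>Poly_Mapping.keys M. mwt M * (k * Poly_Mapping.lookup M k))"
  proof (rule sum_mono)
    fix k assume k: "k \<in> Poly_Mapping.keys M"
    have "k * Poly_Mapping.lookup M k \<le> mwt M"
      unfolding msum_def by (rule member_le_sum) (use k in auto)
    moreover have "k \<le> k * Poly_Mapping.lookup M k" using k by (simp add: in_keys_iff)
    ultimately have "k \<le> mwt M" by linarith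
    then show "k * k * Poly_Mapping.lookup M k \<le> mwt M * (k * Poly_Mapping.lookup M k)"
      by (simp add: mult.assoc mult_right_mono)
  qed
  also have "\<dots> = mwt M * mwt M" by (simp add: msum_def sum_distrib_left)
  finally show ?thesis .
qed




lemma lookup_two: "Poly_Mapping.lookup (Poly_Mapping.single b p + Poly_Mapping.single (Suc b) q) k
   = (if k = b then p else if k = Suc b then q else 0)"
  by (auto simp: lookup_add lookup_single when_def)

lemma straight:
  fixes I :: "'a::field_char_0 dpoly set"
  assumes I: "is_diff_ideal I" and xm: "(XX (Poly_Mapping.single 0 m) :: 'a dpoly) \<in> I"
    and nog: "\<And>M. mdeg M = d \<Longrightarrow> mwt M = w \<Longrightarrow> \<exists>b. m \<le> Poly_Mapping.lookup M b + Poly_Mapping.lookup M (Suc b)"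
  shows "mdeg M = d \<Longrightarrow> mwt M = w \<Longrightarrow> (XX M :: 'a dpoly) \<in> I"
proof (induction "w * w - mQ M" arbitrary: M rule: less_induct)
  case less
  obtain b where b: "m \<le> Poly_Mapping.lookup M b + Poly_Mapping.lookup M (Suc b)"
    using nog less.prems by blast
  define p where "p = min (Poly_Mapping.lookup M b) m"
  define q where "q = m - p"
  have pq: "p + q = m" "p \<le> Poly_Mapping.lookup M b" "q \<le> Poly_Mapping.lookup M (Suc b)"
    using b by (auto simp: p_def q_def)
  define S where "S = Poly_Mapping.single b p + Poly_Mapping.single (Suc b) q"
  define M0 where "M0 = M - S"
  have MS: "M = M0 + S"
  proof (rule poly_mapping_eqI)
    fix k
    show "Poly_Mapping.lookup M k = Poly_Mapping.lookup (M0 + S) k"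
      using pq by (cases "k = b"; cases "k = Suc b") (auto simp: M0_def S_def lookup_add lookup_minus lookup_single when_def)
  qed
  define n where "n = mwt S"
  have dS: "mdeg S = m" using pq by (simp add: S_def msum_add)
  have nS: "n = b * p + Suc b * q" by (simp add: n_def S_def msum_add)
  let ?g = "gg m n :: 'a dpoly"
  have gI: "?g \<in> I" unfolding gg_def by (rule Iders[OF I xm])
  obtain c where c: "\<And>T. Poly_Mapping.lookup ?g T = of_nat (c T)"
    and cpos: "\<And>T. mdeg T = m \<Longrightarrow> mwt T = n \<Longrightarrow> 0 < c T"
    using gg_coef[of m n] by blast
  have cS: "0 < c S" using cpos dS n_def by blast
  then have Skey: "S \<in> Poly_Mapping.keys ?g" by (simp add: in_keys_iff c)
  have prodI: "XX M0 * ?g \<in> I" by (rule Imult[OF I gI])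
  have "XX M0 * ?g = XX M0 * (\<Sum>T\<in>Poly_Mapping.keys ?g. Poly_Mapping.single T (Poly_Mapping.lookup ?g T))"
    by (subst sum_single_pm[of ?g]) (rule refl)
  also have "\<dots> = (\<Sum>T\<in>Poly_Mapping.keys ?g. Poly_Mapping.single (M0 + T) (Poly_Mapping.lookup ?g T))"
    by (simp add: sum_distrib_left mult_single)
  also have "\<dots> = Poly_Mapping.single (M0 + S) (Poly_Mapping.lookup ?g S)
      + (\<Sum>T\<in>Poly_Mapping.keys ?g - {S}. Poly_Mapping.single (M0 + T) (Poly_Mapping.lookup ?g T))"
    by (rule sum.remove[OF finite_keys Skey])
  finally have expand: "XX M0 * ?g = Poly_Mapping.single M (of_nat (c S))
      + (\<Sum>T\<in>Poly_Mapping.keys ?g - {S}. Poly_Mapping.single (M0 + T) (Poly_Mapping.lookup ?g T))"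
    using MS c by simp
  have restI: "(\<Sum>T\<in>Poly_Mapping.keys ?g - {S}. Poly_Mapping.single (M0 + T) (Poly_Mapping.lookup ?g T)) \<in> I"
  proof (rule Isum[OF I])
    fix T assume T: "T \<in> Poly_Mapping.keys ?g - {S}"
    then have dT: "mdeg T = m" and wT: "mwt T = n" using gg_keys[of T m n] by auto
    have "mQ S < mQ T" unfolding S_def
      by (rule qmin) (use dT wT T pq nS in \<open>auto simp: S_def\<close>)
    then have Qlt: "mQ M < mQ (M0 + T)" using MS by (simp add: msum_add)
    have dMT: "mdeg (M0 + T) = d" using less.prems MS dT dS by (simp add: msum_add)
    have wMT: "mwt (M0 + T) = w" using less.prems MS wT n_def by (simp add: msum_add)
    have "mQ (M0 + T) \<le> w * w" using qbound[of "M0 + T"] wMT by simp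
    then have "w * w - mQ (M0 + T) < w * w - mQ M" using Qlt by linarith
    then have "(XX (M0 + T) :: 'a dpoly) \<in> I" using less.hyps dMT wMT by blast
    then have "Poly_Mapping.single 0 (Poly_Mapping.lookup ?g T) * XX (M0 + T) \<in> I" by (rule Imult[OF I])
    then show "Poly_Mapping.single (M0 + T) (Poly_Mapping.lookup ?g T) \<in> I" by (simp add: mult_single)
  qed
  have "Poly_Mapping.single M (of_nat (c S) :: 'a) \<in> I"
    using Idiff[OF I prodI restI] unfolding expand by simp
  then have "Poly_Mapping.single 0 (inverse (of_nat (c S))) * Poly_Mapping.single M (of_nat (c S) :: 'a) \<in> I"
    by (rule Imult[OF I])
  then show ?case using cS by (simp add: mult_single)
qed

theorem upper:
  fixes I :: "'a::field_char_0 dpoly set"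
  assumes I: "is_diff_ideal I" and xm: "(dvar 0 :: 'a dpoly) ^ m \<in> I" and m: "0 < m"
  shows "(dvar i :: 'a dpoly) ^ ((i + 1) * m - i) \<in> I"
proof -
  define N where "N = (i + 1) * (m - 1) + 1"
  obtain m' where m': "m = Suc m'" using m by (cases m) auto
  have NN: "(i + 1) * m - i = N" unfolding N_def m' by (simp add: algebra_simps)
  have xm': "(XX (Poly_Mapping.single 0 m) :: 'a dpoly) \<in> I" using xm by (simp add: dvar_power)
  have "(XX (Poly_Mapping.single i N) :: 'a dpoly) \<in> I"
  proof (rule straight[OF I xm', of N "i * N"])
    fix M :: "nat \<Rightarrow>\<^sub>0 nat" assume d: "mdeg M = N" and w: "mwt M = i * N"
    show "\<exists>b. m \<le> Poly_Mapping.lookup M b + Poly_Mapping.lookup M (Suc b)"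
    proof (rule ccontr)
      assume "\<not> ?thesis"
      then have "\<And>b. Poly_Mapping.lookup M b + Poly_Mapping.lookup M (Suc b) < m" by (simp add: not_le)
      from gordon[OF this, of i] d w show False by (simp add: N_def)
    qed
  qed simp_all
  then show ?thesis unfolding NN by (simp add: dvar_power)
qed




definition EE :: "'a::comm_ring_1 dpoly \<Rightarrow> 'a dpoly" where
  "EE = Dg (\<lambda>n. dd (n - 1)) (\<lambda>n. if n = 0 then 0 else 1)"

lemma EE_add: "EE (p + q) = EE p + EE q" by (simp add: EE_def Dg_add)
lemma EE_mult: "EE (p * q) = EE p * q + p * EE q" by (simp add: EE_def Dg_mult)
lemma EE_sum: "EE (sum f A) = (\<Sum>a\<in>A. EE (f a))" by (simp add: EE_def Dg_sum)
lemma EE_const[simp]: "EE (Poly_Mapping.single 0 c) = 0" by (simp add: EE_def)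
lemma EE_of_nat[simp]: "EE (of_nat c) = 0"
  by (metis EE_const single_of_nat)
lemma EE_of_int[simp]: "EE (of_int c) = 0"
  by (metis EE_const single_of_int)
lemma EE_one[simp]: "EE 1 = 0"
  using EE_of_nat[of 1] by simp

lemma EE_cmult: "EE (Poly_Mapping.single 0 c * p) = Poly_Mapping.single 0 c * EE p"
  by (simp add: EE_mult)

lemma EE_power: "EE (p ^ Suc k) = of_nat (Suc k) * p ^ k * EE p"
  unfolding EE_def by (rule Dg_power)

lemma EE_dvar: "EE (dvar n) = (if n = 0 then 0 else dvar (n - 1))"
  by (simp add: EE_def dvar_def Dg_single)

definition Hent :: "nat \<Rightarrow> nat \<Rightarrow> 'a::comm_ring_1 dpoly" where
  "Hent a b = of_nat (fact (a + b)) * dvar (a + b)"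

lemma EE_Hent: "EE (Hent a b :: 'a::comm_ring_1 dpoly) = of_nat a * Hent (a - 1) b + of_nat b * Hent a (b - 1)"
proof (cases "a + b")
  case 0
  then show ?thesis by (simp add: Hent_def EE_mult EE_dvar)
next
  case (Suc t)
  have L0: "EE (Hent a b :: 'a dpoly) = of_nat (fact (a + b)) * EE (dvar (a + b))"
    by (simp add: Hent_def EE_mult)
  have L: "EE (Hent a b :: 'a dpoly) = of_nat (fact (Suc t)) * dvar t"
    unfolding L0 Suc by (simp add: EE_dvar del: fact_Suc)
  show ?thesis
  proof (cases "a = 0")
    case True
    then have "b = Suc t" using Suc by simp
    then show ?thesis using True L by (simp add: Hent_def algebra_simps)
  next
    case False
    show ?thesis
    proof (cases "b = 0")
      case True
      then have "a = Suc t" using Suc by simp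
      then show ?thesis using True L by (simp add: Hent_def algebra_simps)
    next
      case False
      with \<open>a \<noteq> 0\<close> Suc have e1: "a - 1 + b = t" and e2: "a + (b - 1) = t" by auto
      have "(of_nat a * Hent (a - 1) b + of_nat b * Hent a (b - 1) :: 'a dpoly)
          = (of_nat a + of_nat b) * (of_nat (fact t) * dvar t)"
        unfolding Hent_def e1 e2 by (simp add: algebra_simps)
      also have "\<dots> = of_nat (fact (Suc t)) * dvar t"
      proof -
        have ab: "(of_nat a + of_nat b :: 'a dpoly) = of_nat (Suc t)" using Suc by (metis of_nat_add)
        have "fact (Suc t) = Suc t * fact t" by simp
        then show ?thesis unfolding ab by (simp only: of_nat_mult mult.assoc)
      qed
      finally show ?thesis using L by simp
    qed
  qed
qed

lemma EE_prod: "finite A \<Longrightarrow> EE (\<Prod>r\<in>A. f r) = (\<Sum>r\<in>A. EE (f r) * (\<Prod>r'\<in>A - {r}. f r'))"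
proof (induction A rule: finite_induct)
  case empty then show ?case by simp
next
  case (insert x A)
  have "EE (\<Prod>r\<in>insert x A. f r) = EE (f x) * (\<Prod>r\<in>A. f r) + f x * EE (\<Prod>r\<in>A. f r)"
    using insert by (simp add: EE_mult)
  also have "\<dots> = EE (f x) * (\<Prod>r\<in>A. f r) + (\<Sum>r\<in>A. EE (f r) * (f x * (\<Prod>r'\<in>A - {r}. f r')))"
    using insert by (simp add: sum_distrib_left algebra_simps)
  also have "(\<Sum>r\<in>A. EE (f r) * (f x * (\<Prod>r'\<in>A - {r}. f r'))) = (\<Sum>r\<in>A. EE (f r) * (\<Prod>r'\<in>insert x A - {r}. f r'))"
  proof (rule sum.cong[OF refl])
    fix r assume r: "r \<in> A"
    then have "insert x A - {r} = insert x (A - {r})" using insert by auto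
    then show "EE (f r) * (f x * (\<Prod>r'\<in>A - {r}. f r')) = EE (f r) * (\<Prod>r'\<in>insert x A - {r}. f r')"
      using insert by simp
  qed
  finally show ?case using insert by (simp add: insert_Diff_if)
qed




definition Hmat :: "nat \<Rightarrow> 'a::comm_ring_1 dpoly mat" where
  "Hmat d = mat d d (\<lambda>(r,c). Hent r c)"

definition GG :: "nat \<Rightarrow> 'a::comm_ring_1 dpoly" where "GG d = det (Hmat d)"

lemma det_leibniz:
  assumes "\<And>p r. p permutes {0..<d} \<Longrightarrow> r < d \<Longrightarrow> A $$ (r, p r) = f r (p r)" and "A \<in> carrier_mat d d"
  shows "det A = (\<Sum>p\<in>{p. p permutes {0..<d}}. signof p * (\<Prod>r\<in>{0..<d}. f r (p r)))"
proof -
  have "det A = (\<Sum>p\<in>{p. p permutes {0..<d}}. signof p * (\<Prod>r = 0..<d. A $$ (r, p r)))"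
    by (rule det_def'[OF assms(2)])
  also have "\<dots> = (\<Sum>p\<in>{p. p permutes {0..<d}}. signof p * (\<Prod>r\<in>{0..<d}. f r (p r)))"
  proof (rule sum.cong[OF refl])
    fix p assume "p \<in> {p. p permutes {0..<d}}"
    then have hp: "p permutes {0..<d}" by simp
    have "(\<Prod>r = 0..<d. A $$ (r, p r)) = (\<Prod>r\<in>{0..<d}. f r (p r))"
      by (rule prod.cong) (auto simp: assms(1)[OF hp])
    then show "signof p * (\<Prod>r = 0..<d. A $$ (r, p r)) = signof p * (\<Prod>r\<in>{0..<d}. f r (p r))" by simp
  qed
  finally show ?thesis .
qed

lemma GG_leibniz: "GG d = (\<Sum>p\<in>{p. p permutes {0..<d}}. signof p * (\<Prod>r\<in>{0..<d}. Hent r (p r)))"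
  unfolding GG_def
proof (rule det_leibniz)
  fix p r assume hp: "p permutes {0..<d}" and r: "r < d"
  have "p r < d" using permutes_in_image[OF hp, of r] r by simp
  then show "Hmat d $$ (r, p r) = Hent r (p r)" using r by (simp add: Hmat_def)
qed (simp add: Hmat_def)

definition Rm :: "nat \<Rightarrow> nat \<Rightarrow> 'a::comm_ring_1 dpoly mat" where
  "Rm d r = mat d d (\<lambda>(x,y). if x = r then Hent (r - 1) y else Hent x y)"

definition Cm :: "nat \<Rightarrow> nat \<Rightarrow> 'a::comm_ring_1 dpoly mat" where
  "Cm d c = mat d d (\<lambda>(x,y). if y = c then Hent x (c - 1) else Hent x y)"

lemma detR:
  assumes r: "r < d"
  shows "det (Rm d r :: 'a::comm_ring_1 dpoly mat) = (\<Sum>p\<in>{p. p permutes {0..<d}}. signof p *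
     (Hent (r - 1) (p r) * (\<Prod>x\<in>{0..<d} - {r}. Hent x (p x))))"
proof -
  have "det (Rm d r :: 'a dpoly mat) = (\<Sum>p\<in>{p. p permutes {0..<d}}. signof p *
     (\<Prod>x\<in>{0..<d}. if x = r then Hent (r - 1) (p x) else Hent x (p x)))"
  proof (rule det_leibniz)
    fix p x assume hp: "p permutes {0..<d}" and x: "x < d"
    have "p x < d" using permutes_in_image[OF hp, of x] x by simp
    then show "Rm d r $$ (x, p x) = (if x = r then Hent (r - 1) (p x) else Hent x (p x))" using x by (simp add: Rm_def)
  qed (simp add: Rm_def)
  also have "\<dots> = (\<Sum>p\<in>{p. p permutes {0..<d}}. signof p *
     (Hent (r - 1) (p r) * (\<Prod>x\<in>{0..<d} - {r}. Hent x (p x))))"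
  proof (rule sum.cong[OF refl])
    fix p
    have "(\<Prod>x\<in>{0..<d}. if x = r then Hent (r - 1) (p x) else Hent x (p x))
       = (if r = r then Hent (r - 1) (p r) else Hent r (p r)) * (\<Prod>x\<in>{0..<d} - {r}. if x = r then Hent (r - 1) (p x) else Hent x (p x))"
      by (rule prod.remove) (use r in auto)
    also have "(\<Prod>x\<in>{0..<d} - {r}. if x = r then Hent (r - 1) (p x) else Hent x (p x)) = (\<Prod>x\<in>{0..<d} - {r}. Hent x (p x))"
      by (rule prod.cong) auto
    finally have eq: "(\<Prod>x\<in>{0..<d}. if x = r then Hent (r - 1) (p x) else Hent x (p x))
       = (if r = r then Hent (r - 1) (p r) else Hent r (p r)) * (\<Prod>x\<in>{0..<d} - {r}. Hent x (p x))" .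
    show "signof p * (\<Prod>x\<in>{0..<d}. if x = r then Hent (r - 1) (p x) else Hent x (p x)) =
       signof p * (Hent (r - 1) (p r) * (\<Prod>x\<in>{0..<d} - {r}. Hent x (p x)))" by (simp only: eq if_P[OF refl])
  qed
  finally show ?thesis .
qed

lemma detR0:
  assumes r: "r < d" "0 < r"
  shows "det (Rm d r :: 'a::comm_ring_1 dpoly mat) = 0"
proof (rule det_identical_rows[of _ d r "r - 1"])
  show "Rm d r \<in> carrier_mat d d" by (simp add: Rm_def)
  show "row (Rm d r :: 'a dpoly mat) r = row (Rm d r) (r - 1)"
  proof -
    have ne: "r - 1 \<noteq> r" "r - Suc 0 \<noteq> r" using r by auto
    show ?thesis using r ne by (simp add: Rm_def)
  qed
qed (use r in auto)

lemma detC: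
  assumes c: "c < d"
  shows "det (Cm d c :: 'a::comm_ring_1 dpoly mat) = (\<Sum>p\<in>{p. p permutes {0..<d}}. signof p *
     (Hent (Hilbert_Choice.inv p c) (c - 1) * (\<Prod>x\<in>{0..<d} - {Hilbert_Choice.inv p c}. Hent x (p x))))"
proof -
  have "det (Cm d c :: 'a dpoly mat) = (\<Sum>p\<in>{p. p permutes {0..<d}}. signof p *
     (\<Prod>x\<in>{0..<d}. if p x = c then Hent x (c - 1) else Hent x (p x)))"
  proof (rule det_leibniz)
    fix p x assume hp: "p permutes {0..<d}" and x: "x < d"
    have "p x < d" using permutes_in_image[OF hp, of x] x by simp
    then show "Cm d c $$ (x, p x) = (if p x = c then Hent x (c - 1) else Hent x (p x))" using x by (simp add: Cm_def)
  qed (simp add: Cm_def)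
  also have "\<dots> = (\<Sum>p\<in>{p. p permutes {0..<d}}. signof p *
     (Hent (Hilbert_Choice.inv p c) (c - 1) * (\<Prod>x\<in>{0..<d} - {Hilbert_Choice.inv p c}. Hent x (p x))))"
  proof (rule sum.cong[OF refl])
    fix p assume "p \<in> {p. p permutes {0..<d}}"
    then have hp: "p permutes {0..<d}" by simp
    let ?x0 = "Hilbert_Choice.inv p c"
    have px0: "p ?x0 = c" by (rule permutes_inverses(1)[OF hp])
    have x0: "?x0 \<in> {0..<d}" using permutes_in_image[OF hp, of ?x0] px0 c by simp
    have "(\<Prod>x\<in>{0..<d}. if p x = c then Hent x (c - 1) else Hent x (p x))
       = (if p ?x0 = c then Hent ?x0 (c - 1) else Hent ?x0 (p ?x0)) * (\<Prod>x\<in>{0..<d} - {?x0}. if p x = c then Hent x (c - 1) else Hent x (p x))"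
      by (rule prod.remove) (use x0 in auto)
    also have "(\<Prod>x\<in>{0..<d} - {?x0}. if p x = c then Hent x (c - 1) else Hent x (p x)) = (\<Prod>x\<in>{0..<d} - {?x0}. Hent x (p x))"
    proof (rule prod.cong[OF refl])
      fix x assume "x \<in> {0..<d} - {?x0}"
      then have "x \<noteq> ?x0" by simp
      then have "p x \<noteq> c" using permutes_inverses(2)[OF hp, of x] by auto
      then show "(if p x = c then Hent x (c - 1) else Hent x (p x)) = Hent x (p x)" by simp
    qed
    finally have eq: "(\<Prod>x\<in>{0..<d}. if p x = c then Hent x (c - 1) else Hent x (p x))
       = (if p ?x0 = c then Hent ?x0 (c - 1) else Hent ?x0 (p ?x0)) * (\<Prod>x\<in>{0..<d} - {?x0}. Hent x (p x))" .
    show "signof p * (\<Prod>x\<in>{0..<d}. if p x = c then Hent x (c - 1) else Hent x (p x)) =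
       signof p * (Hent ?x0 (c - 1) * (\<Prod>x\<in>{0..<d} - {?x0}. Hent x (p x)))" by (simp only: eq px0 if_P[OF refl])
  qed
  finally show ?thesis .
qed

lemma detC0:
  assumes c: "c < d" "0 < c"
  shows "det (Cm d c :: 'a::comm_ring_1 dpoly mat) = 0"
proof (rule det_identical_columns[of _ d c "c - 1"])
  show "Cm d c \<in> carrier_mat d d" by (simp add: Cm_def)
  show "col (Cm d c :: 'a dpoly mat) c = col (Cm d c) (c - 1)"
  proof -
    have ne: "c - 1 \<noteq> c" "c - Suc 0 \<noteq> c" using c by auto
    show ?thesis using c ne by (simp add: Cm_def)
  qed
qed (use c in auto)

lemma EE_GG: "EE (GG d :: 'a::comm_ring_1 dpoly) = 0"
proof -
  let ?D = "{0..<d}" and ?P = "{p. p permutes {0..<d}}"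
  let ?Pr = "\<lambda>p r. (\<Prod>x\<in>{0..<d} - {r}. (Hent x (p x) :: 'a dpoly))"
  have "EE (GG d :: 'a dpoly) = (\<Sum>p\<in>?P. signof p * (\<Sum>r\<in>?D. EE (Hent r (p r)) * ?Pr p r))"
    unfolding GG_leibniz EE_sum by (simp add: EE_mult EE_prod)
  also have "\<dots> = (\<Sum>p\<in>?P. signof p * (\<Sum>r\<in>?D. of_nat r * (Hent (r - 1) (p r) * ?Pr p r)))
      + (\<Sum>p\<in>?P. signof p * (\<Sum>r\<in>?D. of_nat (p r) * (Hent r (p r - 1) * ?Pr p r)))"
    by (simp add: EE_Hent sum.distrib distrib_left distrib_right mult.assoc)
  also have "(\<Sum>p\<in>?P. signof p * (\<Sum>r\<in>?D. of_nat r * (Hent (r - 1) (p r) * ?Pr p r)))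
      = (\<Sum>r\<in>?D. of_nat r * det (Rm d r :: 'a dpoly mat))"
  proof -
    have "(\<Sum>p\<in>?P. signof p * (\<Sum>r\<in>?D. of_nat r * (Hent (r - 1) (p r) * ?Pr p r)))
        = (\<Sum>r\<in>?D. \<Sum>p\<in>?P. of_nat r * (signof p * (Hent (r - 1) (p r) * ?Pr p r)))"
      by (subst sum.swap) (simp add: sum_distrib_left mult.left_commute)
    also have "\<dots> = (\<Sum>r\<in>?D. of_nat r * det (Rm d r :: 'a dpoly mat))"
      by (rule sum.cong[OF refl]) (simp add: detR sum_distrib_left)
    finally show ?thesis .
  qed
  also have "\<dots> = 0"
  proof (rule sum.neutral, rule ballI)
    fix r assume "r \<in> ?D"
    then show "of_nat r * det (Rm d r :: 'a dpoly mat) = 0"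
      by (cases "r = 0") (simp_all add: detR0)
  qed
  also have "(\<Sum>p\<in>?P. signof p * (\<Sum>r\<in>?D. of_nat (p r) * (Hent r (p r - 1) * ?Pr p r)))
      = (\<Sum>p\<in>?P. signof p * (\<Sum>c\<in>?D. of_nat c * (Hent (Hilbert_Choice.inv p c) (c - 1) * ?Pr p (Hilbert_Choice.inv p c))))"
  proof (rule sum.cong[OF refl])
    fix p assume "p \<in> ?P"
    then have hp: "p permutes ?D" by simp
    have "(\<Sum>r\<in>?D. of_nat (p r) * (Hent r (p r - 1) * ?Pr p r))
       = (\<Sum>c\<in>?D. of_nat (p (Hilbert_Choice.inv p c)) * (Hent (Hilbert_Choice.inv p c) (p (Hilbert_Choice.inv p c) - 1) * ?Pr p (Hilbert_Choice.inv p c)))"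
      using sum.permute[OF permutes_inv[OF hp], of "\<lambda>r. of_nat (p r) * (Hent r (p r - 1) * ?Pr p r)"]
      by (simp add: comp_def)
    also have "\<dots> = (\<Sum>c\<in>?D. of_nat c * (Hent (Hilbert_Choice.inv p c) (c - 1) * ?Pr p (Hilbert_Choice.inv p c)))"
      by (simp add: permutes_inverses(1)[OF hp])
    finally show "signof p * (\<Sum>r\<in>?D. of_nat (p r) * (Hent r (p r - 1) * ?Pr p r))
      = signof p * (\<Sum>c\<in>?D. of_nat c * (Hent (Hilbert_Choice.inv p c) (c - 1) * ?Pr p (Hilbert_Choice.inv p c)))" by simp
  qed
  also have "\<dots> = (\<Sum>c\<in>?D. of_nat c * det (Cm d c :: 'a dpoly mat))"
  proof -
    have "(\<Sum>p\<in>?P. signof p * (\<Sum>c\<in>?D. of_nat c * (Hent (Hilbert_Choice.inv p c) (c - 1) * ?Pr p (Hilbert_Choice.inv p c))))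
        = (\<Sum>c\<in>?D. \<Sum>p\<in>?P. of_nat c * (signof p * (Hent (Hilbert_Choice.inv p c) (c - 1) * ?Pr p (Hilbert_Choice.inv p c))))"
      by (subst sum.swap) (simp add: sum_distrib_left mult.left_commute)
    also have "\<dots> = (\<Sum>c\<in>?D. of_nat c * det (Cm d c :: 'a dpoly mat))"
      by (rule sum.cong[OF refl]) (simp add: detC sum_distrib_left)
    finally show ?thesis .
  qed
  also have "\<dots> = 0"
  proof (rule sum.neutral, rule ballI)
    fix c assume "c \<in> ?D"
    then show "of_nat c * det (Cm d c :: 'a dpoly mat) = 0"
      by (cases "c = 0") (simp_all add: detC0)
  qed
  finally show ?thesis by simp
qed




lemma of_nat_dp: "(of_nat k :: 'a::comm_ring_1 dpoly) = Poly_Mapping.single 0 (of_nat k)" by simp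
lemma of_int_dp: "(of_int k :: 'a::comm_ring_1 dpoly) = Poly_Mapping.single 0 (of_int k)" by simp

lemma Hent_single: "(Hent r c :: 'a::comm_ring_1 dpoly) = Poly_Mapping.single (dd (r + c)) (of_nat (fact (r + c)))"
  unfolding Hent_def dvar_def of_nat_dp[of "fact (r + c)"] mult_single by simp

lemma prod_Hent: "finite A \<Longrightarrow> (\<Prod>r\<in>A. Hent r (p r) :: 'a::comm_ring_1 dpoly)
   = Poly_Mapping.single (\<Sum>r\<in>A. dd (r + p r)) (\<Prod>r\<in>A. of_nat (fact (r + p r)))"
proof (induction A rule: finite_induct)
  case empty then show ?case by simp
next
  case (insert x A)
  then show ?case by (simp add: Hent_single mult_single)
qed

definition monp :: "nat \<Rightarrow> (nat \<Rightarrow> nat) \<Rightarrow> nat \<Rightarrow>\<^sub>0 nat" where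
  "monp d p = (\<Sum>r\<in>{0..<d}. dd (r + p r))"

definition cfp :: "nat \<Rightarrow> (nat \<Rightarrow> nat) \<Rightarrow> 'a::comm_ring_1" where
  "cfp d p = of_int (sign p) * (\<Prod>r\<in>{0..<d}. of_nat (fact (r + p r)))"

lemma GG_single: "(GG d :: 'a::comm_ring_1 dpoly) = (\<Sum>p\<in>{p. p permutes {0..<d}}. Poly_Mapping.single (monp d p) (cfp d p))"
  unfolding GG_leibniz
proof (rule sum.cong[OF refl])
  fix p
  show "signof p * (\<Prod>r\<in>{0..<d}. Hent r (p r)) = Poly_Mapping.single (monp d p) (cfp d p :: 'a)"
    unfolding prod_Hent[OF finite_atLeastLessThan] of_int_dp[of "sign p"] mult_single
    by (simp add: monp_def cfp_def)
qed

lemma keys_GG: "e \<in> Poly_Mapping.keys (GG d :: 'a::comm_ring_1 dpoly) \<Longrightarrow> \<exists>p. p permutes {0..<d} \<and> e = monp d p"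
proof -
  assume "e \<in> Poly_Mapping.keys (GG d :: 'a dpoly)"
  moreover have "Poly_Mapping.keys (GG d :: 'a dpoly) \<subseteq> (\<Union>p\<in>{p. p permutes {0..<d}}. Poly_Mapping.keys (Poly_Mapping.single (monp d p) (cfp d p :: 'a)))"
    unfolding GG_single by (rule keys_sum)
  ultimately have "e \<in> (\<Union>p\<in>{p. p permutes {0..<d}}. Poly_Mapping.keys (Poly_Mapping.single (monp d p) (cfp d p :: 'a)))"
    by blast
  then show ?thesis by (auto split: if_splits)
qed

lemma lookup_monp: "Poly_Mapping.lookup (monp d p) k = (\<Sum>r\<in>{0..<d}. (1 when r + p r = k))"
  by (simp add: monp_def lookup_sum lookup_single)

lemma monp0: "Poly_Mapping.lookup (monp d p) 0 \<le> 1"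
proof -
  have "Poly_Mapping.lookup (monp d p) 0 \<le> (\<Sum>r\<in>{0..<d}. (if r = 0 then 1 else 0))"
    unfolding lookup_monp by (rule sum_mono) (auto simp: when_def)
  also have "\<dots> \<le> 1" by (simp add: sum.delta)
  finally show ?thesis .
qed

lemma msum_sum: "msum h (sum f A) = (\<Sum>a\<in>A. msum h (f a))"
  by (induction A rule: infinite_finite_induct) (auto simp: msum_add)

lemma mdeg_monp: "mdeg (monp d p) = d"
  by (simp add: monp_def msum_sum)

lemma keys_GG_props:
  assumes "e \<in> Poly_Mapping.keys (GG d :: 'a::comm_ring_1 dpoly)"
  shows "Poly_Mapping.lookup e 0 \<le> 1" "mdeg e = d"
  using keys_GG[OF assms] monp0 mdeg_monp by auto

lemma sum_only:
  assumes "finite A" "a \<in> A" "\<And>x. x \<in> A \<Longrightarrow> x \<noteq> a \<Longrightarrow> f x = 0"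
  shows "sum f A = f a"
proof -
  have "sum f A = f a + sum f (A - {a})" by (rule sum.remove[OF assms(1,2)])
  also have "sum f (A - {a}) = 0" by (rule sum.neutral) (use assms(3) in auto)
  finally show ?thesis by simp
qed

lemma sum_dd_const: "finite A \<Longrightarrow> (\<Sum>r\<in>A. dd i) = Poly_Mapping.single i (card A)"
  by (induction A rule: finite_induct) (simp_all add: single_add[symmetric])

lemma GG_coef:
  assumes d: "d = Suc i"
  shows "Poly_Mapping.lookup (GG d :: 'a::field_char_0 dpoly) (Poly_Mapping.single i d) \<noteq> 0"
proof -
  define p0 where "p0 r = (if r < d then i - r else r)" for r
  have inj: "inj_on p0 {0..<d}" by (rule inj_onI) (auto simp: p0_def d)
  have img: "p0 ` {0..<d} = {0..<d}"
  proof
    show "p0 ` {0..<d} \<subseteq> {0..<d}" by (auto simp: p0_def d)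
    show "{0..<d} \<subseteq> p0 ` {0..<d}"
    proof
      fix y assume y: "y \<in> {0..<d}"
      then have "y = p0 (i - y)" "i - y \<in> {0..<d}" by (auto simp: p0_def d)
      then show "y \<in> p0 ` {0..<d}" by blast
    qed
  qed
  have hp0: "p0 permutes {0..<d}"
    by (rule bij_imp_permutes) (use inj img in \<open>auto simp: bij_betw_def p0_def\<close>)
  have m0: "monp d p0 = Poly_Mapping.single i d"
  proof -
    have eq: "monp d p0 = (\<Sum>r\<in>{0..<d}. dd i)" unfolding monp_def
      by (rule sum.cong[OF refl]) (auto simp: p0_def d)
    have s: "(\<Sum>r\<in>{0..<d}. dd i) = Poly_Mapping.single i d"
      by (subst sum_dd_const) simp_all
    show ?thesis by (simp only: eq s)
  qed
  have uniq: "p = p0" if hp: "p permutes {0..<d}" and mp: "monp d p = Poly_Mapping.single i d" for p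
  proof
    fix r
    show "p r = p0 r"
    proof (cases "r < d")
      case True
      have "(1::nat) = (1 when r + p r = r + p r)" by simp
      also have "\<dots> \<le> (\<Sum>r'\<in>{0..<d}. (1 when r' + p r' = r + p r))"
        by (rule member_le_sum[where f = "\<lambda>r'. ((1::nat) when r' + p r' = r + p r)"]) (use True in auto)
      finally have le: "(1::nat) \<le> (\<Sum>r'\<in>{0..<d}. (1 when r' + p r' = r + p r))" .
      have "Poly_Mapping.lookup (monp d p) (r + p r) \<noteq> 0" unfolding lookup_monp using le by linarith
      then have "r + p r = i" using mp by (auto simp: lookup_single when_def split: if_splits)
      then show ?thesis using True by (simp add: p0_def)
    next
      case False
      then show ?thesis using permutes_not_in[OF hp, of r] by (simp add: p0_def)
    qed
  qed
  have "Poly_Mapping.lookup (GG d :: 'a dpoly) (Poly_Mapping.single i d)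
      = (\<Sum>p\<in>{p. p permutes {0..<d}}. (cfp d p when monp d p = Poly_Mapping.single i d))"
    unfolding GG_single by (simp add: lookup_sum lookup_single)
  also have "\<dots> = (cfp d p0 when monp d p0 = Poly_Mapping.single i d)"
    by (rule sum_only) (use hp0 uniq in \<open>auto simp: finite_permutations when_def\<close>)
  also have "\<dots> = cfp d p0" using m0 by simp
  also have "\<dots> \<noteq> 0"
  proof -
    have "(of_int (sign p0) :: 'a) \<noteq> 0" by simp
    moreover have "(\<Prod>r\<in>{0..<d}. of_nat (fact (r + p0 r)) :: 'a) \<noteq> 0" by (simp add: prod_zero_iff)
    ultimately show ?thesis by (simp add: cfp_def)
  qed
  finally show ?thesis .
qed

section \<open>Restriction to powers of one variable\<close>

definition psi :: "nat \<Rightarrow> 'a::comm_ring_1 dpoly \<Rightarrow> 'a dpoly" where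
  "psi i p = Poly_Mapping.mapp (\<lambda>k c. if Poly_Mapping.keys k \<subseteq> {i} then c else 0) p"

lemma lookup_psi: "Poly_Mapping.lookup (psi i p) k = (if Poly_Mapping.keys k \<subseteq> {i} then Poly_Mapping.lookup p k else 0)"
  by (simp add: psi_def lookup_mapp when_def in_keys_iff)

lemma psi_add: "psi i (p + q) = psi i p + psi i q"
  by (rule poly_mapping_eqI) (simp add: lookup_psi lookup_add)

lemma psi_zero[simp]: "psi i 0 = 0"
  by (rule poly_mapping_eqI) (simp add: lookup_psi)

lemma psi_single: "psi i (Poly_Mapping.single e a) = (if Poly_Mapping.keys e \<subseteq> {i} then Poly_Mapping.single e a else 0)"
  by (rule poly_mapping_eqI) (auto simp: lookup_psi lookup_single when_def)

lemma psi_mult: "psi i (p * q) = psi i p * psi i q"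
proof (induction p rule: pm_induct)
  case zero then show ?case by simp
next
  case (add p1 p2) then show ?case by (simp add: distrib_right psi_add)
next
  case (single e a)
  show ?case
  proof (induction q rule: pm_induct)
    case zero then show ?case by simp
  next
    case (add q1 q2) then show ?case by (simp add: distrib_left psi_add)
  next
    case (single f b) then show ?case by (simp add: mult_single psi_single keys_add_nat)
  qed
qed

lemma psi_one: "psi i 1 = 1"
  using psi_single[of i 0 1] by simp

lemma psi_power: "psi i (p ^ n) = psi i p ^ n"
  by (induction n) (simp_all add: psi_one psi_mult)

lemma keys_sub_single:
  fixes k :: "nat \<Rightarrow>\<^sub>0 nat"
  assumes "Poly_Mapping.keys k \<subseteq> {i}"
  shows "k = Poly_Mapping.single i (mdeg k)"
proof -
  have "mdeg k = Poly_Mapping.lookup k i" using msum_extend[of "{i}" k "\<lambda>_. 1"] assms by simp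
  then show ?thesis
    by (intro poly_mapping_eqI) (use assms in \<open>auto simp: lookup_single when_def in_keys_iff\<close>)
qed

lemma psi_GG:
  shows "psi i (GG d :: 'a::comm_ring_1 dpoly) = Poly_Mapping.single (Poly_Mapping.single i d) (Poly_Mapping.lookup (GG d) (Poly_Mapping.single i d))"
proof (rule poly_mapping_eqI)
  fix k
  show "Poly_Mapping.lookup (psi i (GG d :: 'a dpoly)) k = Poly_Mapping.lookup (Poly_Mapping.single (Poly_Mapping.single i d) (Poly_Mapping.lookup (GG d :: 'a dpoly) (Poly_Mapping.single i d))) k"
  proof (cases "Poly_Mapping.keys k \<subseteq> {i} \<and> k \<in> Poly_Mapping.keys (GG d :: 'a dpoly)")
    case True
    then have "k = Poly_Mapping.single i d" using keys_sub_single[of k i] keys_GG_props(2)[of k d] by auto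
    moreover have "Poly_Mapping.keys (Poly_Mapping.single i d :: nat \<Rightarrow>\<^sub>0 nat) \<subseteq> {i}" by (cases "d = 0") simp_all
    ultimately show ?thesis by (simp add: lookup_psi lookup_single)
  next
    case False
    have ks: "Poly_Mapping.keys (Poly_Mapping.single i d :: nat \<Rightarrow>\<^sub>0 nat) \<subseteq> {i}" by (cases "d = 0") simp_all
    show ?thesis
    proof (cases "k = Poly_Mapping.single i d")
      case True
      with False ks have "Poly_Mapping.lookup (GG d :: 'a dpoly) k = 0" by (simp add: in_keys_iff)
      with True ks show ?thesis by (simp add: lookup_psi)
    next
      case ne: False
      have "Poly_Mapping.lookup (psi i (GG d :: 'a dpoly)) k = 0"
        using False by (auto simp: lookup_psi in_keys_iff)
      with ne show ?thesis by (simp add: lookup_single when_def)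
    qed
  qed
qed

lemma single_pow: "Poly_Mapping.single (Poly_Mapping.single i d) c ^ n = Poly_Mapping.single (Poly_Mapping.single i (n * d)) (c ^ n)"
  by (induction n) (simp_all add: mult_single single_add[symmetric])

definition FF :: "nat \<Rightarrow> nat \<Rightarrow> 'a::comm_ring_1 dpoly" where
  "FF d m = GG d ^ (m - 1)"

lemma EE_FF: "EE (FF d m :: 'a::comm_ring_1 dpoly) = 0"
proof (cases "m - 1")
  case 0 then show ?thesis by (simp add: FF_def)
next
  case (Suc k) then show ?thesis unfolding FF_def Suc EE_power EE_GG by simp
qed

lemma keys_GG_pow: "e \<in> Poly_Mapping.keys ((GG d :: 'a::comm_ring_1 dpoly) ^ n) \<Longrightarrow> Poly_Mapping.lookup e 0 \<le> n"
proof (induction n arbitrary: e)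
  case 0 then show ?case by simp
next
  case (Suc n)
  then have "e \<in> Poly_Mapping.keys (GG d * (GG d :: 'a dpoly) ^ n)" by simp
  then obtain a b where a: "a \<in> Poly_Mapping.keys (GG d :: 'a dpoly)" and b: "b \<in> Poly_Mapping.keys ((GG d :: 'a dpoly) ^ n)" and e: "e = a + b"
    using keys_mult by blast
  have "Poly_Mapping.lookup a 0 \<le> 1" by (rule keys_GG_props(1)[OF a])
  moreover have "Poly_Mapping.lookup b 0 \<le> n" by (rule Suc.IH[OF b])
  ultimately show ?case by (simp add: e lookup_add)
qed

lemma keys_FF: "e \<in> Poly_Mapping.keys (FF d m :: 'a::comm_ring_1 dpoly) \<Longrightarrow> Poly_Mapping.lookup e 0 \<le> m - 1"
  unfolding FF_def by (rule keys_GG_pow)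

lemma FF_coef:
  assumes d: "d = Suc i"
  shows "Poly_Mapping.lookup (FF d m :: 'a::field_char_0 dpoly) (Poly_Mapping.single i ((m - 1) * d)) \<noteq> 0"
proof -
  have "Poly_Mapping.lookup (FF d m :: 'a dpoly) (Poly_Mapping.single i ((m - 1) * d))
      = Poly_Mapping.lookup (psi i (FF d m :: 'a dpoly)) (Poly_Mapping.single i ((m - 1) * d))"
    by (simp add: lookup_psi)
  also have "\<dots> = (Poly_Mapping.lookup (GG d :: 'a dpoly) (Poly_Mapping.single i d)) ^ (m - 1)"
    unfolding FF_def psi_power psi_GG single_pow by simp
  also have "\<dots> \<noteq> 0" by (rule power_not_zero[OF GG_coef[OF d]])
  finally show ?thesis .
qed




definition mfact :: "(nat \<Rightarrow>\<^sub>0 nat) \<Rightarrow> nat" where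
  "mfact e = (\<Prod>n\<in>Poly_Mapping.keys e. fact (Poly_Mapping.lookup e n))"

lemma mfact_extend: "finite K \<Longrightarrow> Poly_Mapping.keys e \<subseteq> K \<Longrightarrow> mfact e = (\<Prod>n\<in>K. fact (Poly_Mapping.lookup e n))"
  unfolding mfact_def by (rule prod.mono_neutral_left) (auto simp: in_keys_iff)

lemma lookup_sh: "Poly_Mapping.lookup (e - Poly_Mapping.single n a + Poly_Mapping.single m b) k = Poly_Mapping.lookup e k - (if k = n then a else 0) + (if k = m then b else (0::nat))"
  by (simp add: lookup_add lookup_minus lookup_single when_def)

lemma mfact_shift:
  assumes n: "n \<in> Poly_Mapping.keys e"
  shows "Poly_Mapping.lookup e n * mfact (e - dd n + dd (Suc n)) = mfact e * (Poly_Mapping.lookup e (Suc n) + 1)"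
proof -
  let ?e' = "e - dd n + dd (Suc n)"
  define R where "R = Poly_Mapping.keys e - {n, Suc n}"
  define K where "K = insert n (insert (Suc n) R)"
  have fR: "finite R" by (simp add: R_def)
  have nR: "n \<notin> R" "Suc n \<notin> R" by (auto simp: R_def)
  have fK: "finite K" by (simp add: K_def fR)
  have kK: "Poly_Mapping.keys e \<subseteq> K" by (auto simp: K_def R_def)
  have kK': "Poly_Mapping.keys ?e' \<subseteq> K"
  proof
    fix k assume "k \<in> Poly_Mapping.keys ?e'"
    then have "Poly_Mapping.lookup ?e' k \<noteq> 0" by (simp add: in_keys_iff)
    then show "k \<in> K" by (auto simp: K_def R_def lookup_sh in_keys_iff split: if_splits)
  qed
  have en: "Poly_Mapping.lookup e n \<noteq> 0" using n by (simp add: in_keys_iff)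
  have PR: "(\<Prod>k\<in>R. fact (Poly_Mapping.lookup ?e' k)) = (\<Prod>k\<in>R. fact (Poly_Mapping.lookup e k))"
    by (rule prod.cong[OF refl]) (use nR in \<open>auto simp: lookup_sh\<close>)
  have m1: "mfact ?e' = fact (Poly_Mapping.lookup e n - 1) * (fact (Poly_Mapping.lookup e (Suc n) + 1) * (\<Prod>k\<in>R. fact (Poly_Mapping.lookup e k)))"
  proof -
    have ln: "Poly_Mapping.lookup ?e' n = Poly_Mapping.lookup e n - 1" by (simp add: lookup_sh)
    have lsn: "Poly_Mapping.lookup ?e' (Suc n) = Poly_Mapping.lookup e (Suc n) + 1" by (simp add: lookup_sh)
    have pins: "\<And>g. (\<Prod>k\<in>insert n (insert (Suc n) R). g k) = g n * (g (Suc n) * (\<Prod>k\<in>R. g k))"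
      using fR nR by simp
    show ?thesis unfolding mfact_extend[OF fK kK'] K_def pins ln lsn PR ..
  qed
  have m2: "mfact e = fact (Poly_Mapping.lookup e n) * (fact (Poly_Mapping.lookup e (Suc n)) * (\<Prod>k\<in>R. fact (Poly_Mapping.lookup e k)))"
  proof -
    have pins: "\<And>g. (\<Prod>k\<in>insert n (insert (Suc n) R). g k) = g n * (g (Suc n) * (\<Prod>k\<in>R. g k))"
      using fR nR by simp
    show ?thesis unfolding mfact_extend[OF fK kK] K_def pins ..
  qed
  have f1: "Poly_Mapping.lookup e n * fact (Poly_Mapping.lookup e n - 1) = fact (Poly_Mapping.lookup e n)"
    using en by (metis fact_reduce neq0_conv of_nat_id)
  have f2: "fact (Poly_Mapping.lookup e (Suc n) + 1) = (Poly_Mapping.lookup e (Suc n) + 1) * fact (Poly_Mapping.lookup e (Suc n))"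
    by simp
  show ?thesis unfolding m1 m2 f2 f1[symmetric] by (simp only: mult_ac)
qed

lemma Uniq2:
  assumes "n \<in> Poly_Mapping.keys e" "n' \<in> Poly_Mapping.keys e" "e - dd n + dd (Suc n) = e - dd n' + dd (Suc n')"
  shows "n = n'"
proof (rule ccontr)
  assume ne: "n \<noteq> n'"
  have "Poly_Mapping.lookup (e - dd n + dd (Suc n)) n = Poly_Mapping.lookup (e - dd n' + dd (Suc n')) n"
    using assms(3) by simp
  with ne assms(1) show False by (auto simp: lookup_sh in_keys_iff split: if_splits)
qed

lemma Uniq1:
  fixes k k' :: nat
  assumes "k \<in> Poly_Mapping.keys mo" "k' \<in> Poly_Mapping.keys mo" "k \<noteq> 0"
    "mo - dd k + dd (k - 1) = mo - dd k' + dd (k' - 1)"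
  shows "k = k'"
proof (rule ccontr)
  assume ne: "k \<noteq> k'"
  have "Poly_Mapping.lookup (mo - dd k + dd (k - 1)) k = Poly_Mapping.lookup (mo - dd k' + dd (k' - 1)) k"
    using assms(4) by simp
  moreover have "k - 1 \<noteq> k" using assms(3) by simp
  ultimately show False using ne assms(1,3) by (auto simp: lookup_sh in_keys_iff split: if_splits)
qed

lemma U1:
  fixes k :: nat
  assumes "k \<in> Poly_Mapping.keys mo" "k \<noteq> 0" "e = mo - dd k + dd (k - 1)"
  shows "k - 1 \<in> Poly_Mapping.keys e" "mo = e - dd (k - 1) + dd (Suc (k - 1))"
proof -
  show "k - 1 \<in> Poly_Mapping.keys e" using assms by (auto simp: in_keys_iff lookup_sh)
  show "mo = e - dd (k - 1) + dd (Suc (k - 1))"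
    by (rule poly_mapping_eqI) (use assms in \<open>auto simp: lookup_sh in_keys_iff\<close>)
qed

lemma U2:
  assumes "n \<in> Poly_Mapping.keys e" "mo = e - dd n + dd (Suc n)"
  shows "Suc n \<in> Poly_Mapping.keys mo" "mo - dd (Suc n) + dd (Suc n - 1) = e"
    "Poly_Mapping.lookup mo (Suc n) = Poly_Mapping.lookup e (Suc n) + 1"
proof -
  show "Suc n \<in> Poly_Mapping.keys mo" using assms by (auto simp: in_keys_iff lookup_sh)
  show "mo - dd (Suc n) + dd (Suc n - 1) = e"
    by (rule poly_mapping_eqI) (use assms in \<open>auto simp: lookup_sh in_keys_iff\<close>)
  show "Poly_Mapping.lookup mo (Suc n) = Poly_Mapping.lookup e (Suc n) + 1"
    using assms by (simp add: lookup_sh)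
qed

lemma lookup_EE_single:
  "Poly_Mapping.lookup (EE (Poly_Mapping.single mo a)) e =
   (\<Sum>n\<in>Poly_Mapping.keys e. Poly_Mapping.lookup (Poly_Mapping.single mo a) (e - dd n + dd (Suc n)) * of_nat (Poly_Mapping.lookup e (Suc n) + 1))"
proof -
  let ?w = "\<lambda>n. if n = 0 then 0 else (1::'a)"
  have L: "Poly_Mapping.lookup (EE (Poly_Mapping.single mo a)) e =
     (\<Sum>k\<in>Poly_Mapping.keys mo. (a * of_nat (Poly_Mapping.lookup mo k) * ?w k when mo - dd k + dd (k - 1) = e))"
    by (simp add: EE_def Dg_single lookup_sum lookup_single)
  have R: "(\<Sum>n\<in>Poly_Mapping.keys e. Poly_Mapping.lookup (Poly_Mapping.single mo a) (e - dd n + dd (Suc n)) * of_nat (Poly_Mapping.lookup e (Suc n) + 1))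
     = (\<Sum>n\<in>Poly_Mapping.keys e. (a when mo = e - dd n + dd (Suc n)) * of_nat (Poly_Mapping.lookup e (Suc n) + 1))"
    by (simp add: lookup_single)
  show ?thesis
  proof (cases "\<exists>n\<in>Poly_Mapping.keys e. mo = e - dd n + dd (Suc n)")
    case True
    then obtain n where n: "n \<in> Poly_Mapping.keys e" "mo = e - dd n + dd (Suc n)" by blast
    note u = U2[OF n]
    have "(\<Sum>n\<in>Poly_Mapping.keys e. (a when mo = e - dd n + dd (Suc n)) * of_nat (Poly_Mapping.lookup e (Suc n) + 1))
        = (a when mo = e - dd n + dd (Suc n)) * of_nat (Poly_Mapping.lookup e (Suc n) + 1)"
      by (rule sum_only) (use n Uniq2 in \<open>auto simp: when_def\<close>)
    also have "\<dots> = a * of_nat (Poly_Mapping.lookup e (Suc n) + 1)" using n by simp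
    finally have Rv: "(\<Sum>n\<in>Poly_Mapping.keys e. (a when mo = e - dd n + dd (Suc n)) * of_nat (Poly_Mapping.lookup e (Suc n) + 1))
        = a * of_nat (Poly_Mapping.lookup e (Suc n) + 1)" .
    have "(\<Sum>k\<in>Poly_Mapping.keys mo. (a * of_nat (Poly_Mapping.lookup mo k) * ?w k when mo - dd k + dd (k - 1) = e))
        = (a * of_nat (Poly_Mapping.lookup mo (Suc n)) * ?w (Suc n) when mo - dd (Suc n) + dd (Suc n - 1) = e)"
    proof (rule sum_only)
      fix k assume k: "k \<in> Poly_Mapping.keys mo" "k \<noteq> Suc n"
      show "(a * of_nat (Poly_Mapping.lookup mo k) * ?w k when mo - dd k + dd (k - 1) = e) = 0"
      proof (cases "k = 0")
        case False
        have "mo - dd k + dd (k - 1) \<noteq> mo - dd (Suc n) + dd (Suc n - 1)"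
          using Uniq1[OF k(1) u(1) False] k(2) by blast
        then show ?thesis using u(2) by (simp add: when_def)
      qed simp
    qed (use u in auto)
    also have "\<dots> = a * of_nat (Poly_Mapping.lookup e (Suc n) + 1)" using u by simp
    finally show ?thesis unfolding L R Rv .
  next
    case False
    have "(\<Sum>k\<in>Poly_Mapping.keys mo. (a * of_nat (Poly_Mapping.lookup mo k) * ?w k when mo - dd k + dd (k - 1) = e)) = 0"
    proof (rule sum.neutral, rule ballI)
      fix k assume k: "k \<in> Poly_Mapping.keys mo"
      show "(a * of_nat (Poly_Mapping.lookup mo k) * ?w k when mo - dd k + dd (k - 1) = e) = 0"
      proof (cases "k = 0 \<or> mo - dd k + dd (k - 1) \<noteq> e")
        case True then show ?thesis by (auto simp: when_def)
      next
        case nc: False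
        then have "k \<noteq> 0" "e = mo - dd k + dd (k - 1)" by auto
        from U1[OF k this] False show ?thesis by blast
      qed
    qed
    moreover have "(\<Sum>n\<in>Poly_Mapping.keys e. (a when mo = e - dd n + dd (Suc n)) * of_nat (Poly_Mapping.lookup e (Suc n) + 1)) = 0"
      using False by (intro sum.neutral) (auto simp: when_def)
    ultimately show ?thesis unfolding L R by simp
  qed
qed

lemma lookup_EE:
  "Poly_Mapping.lookup (EE p) e = (\<Sum>n\<in>Poly_Mapping.keys e. Poly_Mapping.lookup p (e - dd n + dd (Suc n)) * of_nat (Poly_Mapping.lookup e (Suc n) + 1))"
proof (induction p rule: pm_induct)
  case zero then show ?case by (simp add: EE_def)
next
  case (add p q) then show ?case by (simp add: EE_add lookup_add sum.distrib distrib_right)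
next
  case (single mo a) then show ?case by (rule lookup_EE_single)
qed




definition phi :: "'a::comm_ring_1 dpoly \<Rightarrow> (nat \<Rightarrow>\<^sub>0 nat) \<Rightarrow> 'a" where
  "phi F e = Poly_Mapping.lookup F e * of_nat (mfact e)"

definition PHI :: "'a::comm_ring_1 dpoly \<Rightarrow> 'a dpoly \<Rightarrow> 'a" where
  "PHI F p = (\<Sum>e\<in>Poly_Mapping.keys p. Poly_Mapping.lookup p e * phi F e)"

lemma PHI_add: "PHI F (p + q) = PHI F p + PHI F q"
  unfolding PHI_def by (rule setsum_keys_plus_distrib) (auto simp: distrib_right)

lemma PHI_zero[simp]: "PHI F 0 = 0" by (simp add: PHI_def)

lemma PHI_single: "PHI F (Poly_Mapping.single e a) = a * phi F e"
  by (cases "a = 0") (simp_all add: PHI_def)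

lemma PHI_sum: "PHI F (sum f A) = (\<Sum>a\<in>A. PHI F (f a))"
  by (induction A rule: infinite_finite_induct) (auto simp: PHI_add)

lemma PHI_diff: "PHI F (p - q) = PHI F p - PHI F q"
  using PHI_add[of F "p - q" q] by (simp add: algebra_simps)

lemma PHI_dderiv:
  assumes EF: "EE F = 0"
  shows "PHI F (dderiv p) = 0"
proof (induction p rule: pm_induct)
  case zero then show ?case by (simp add: dderiv_Dg)
next
  case (add p q) then show ?case by (simp add: dderiv_Dg Dg_add PHI_add)
next
  case (single e a)
  let ?e' = "\<lambda>n. e - dd n + dd (Suc n)"
  have "PHI F (dderiv (Poly_Mapping.single e a)) = (\<Sum>n\<in>Poly_Mapping.keys e. a * of_nat (Poly_Mapping.lookup e n) * phi F (?e' n))"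
    by (simp add: dderiv_Dg Dg_single PHI_sum PHI_single)
  also have "\<dots> = (\<Sum>n\<in>Poly_Mapping.keys e. a * of_nat (mfact e) * (Poly_Mapping.lookup F (?e' n) * of_nat (Poly_Mapping.lookup e (Suc n) + 1)))"
  proof (rule sum.cong[OF refl])
    fix n assume n: "n \<in> Poly_Mapping.keys e"
    have "(of_nat (Poly_Mapping.lookup e n) * of_nat (mfact (?e' n)) :: 'a) = of_nat (mfact e) * of_nat (Poly_Mapping.lookup e (Suc n) + 1)"
      using mfact_shift[OF n] by (metis of_nat_mult)
    then show "a * of_nat (Poly_Mapping.lookup e n) * phi F (?e' n) = a * of_nat (mfact e) * (Poly_Mapping.lookup F (?e' n) * of_nat (Poly_Mapping.lookup e (Suc n) + 1))"
      unfolding phi_def by (metis (no_types, lifting) mult.assoc mult.left_commute)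
  qed
  also have "\<dots> = a * of_nat (mfact e) * Poly_Mapping.lookup (EE F) e"
    by (simp add: lookup_EE sum_distrib_left)
  also have "\<dots> = 0" using EF by simp
  finally show ?case .
qed

definition JJ :: "'a::comm_ring_1 dpoly \<Rightarrow> 'a dpoly set" where
  "JJ F = {p. \<forall>q. PHI F (q * p) = 0}"

lemma JJ_diff:
  assumes EF: "EE F = 0"
  shows "is_diff_ideal (JJ F)"
  unfolding is_diff_ideal_def
proof (intro conjI ballI allI)
  show "0 \<in> JJ F" by (simp add: JJ_def)
next
  fix p q assume "p \<in> JJ F" "q \<in> JJ F"
  then show "p + q \<in> JJ F" by (simp add: JJ_def distrib_left PHI_add)
next
  fix p r assume "p \<in> JJ F"
  then show "r * p \<in> JJ F" by (simp add: JJ_def mult.assoc[symmetric])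
next
  fix p assume p: "p \<in> JJ F"
  show "dderiv p \<in> JJ F"
    unfolding JJ_def
  proof (intro CollectI allI)
    fix q
    have "q * dderiv p = dderiv (q * p) - dderiv q * p" by (simp add: dderiv_Dg Dg_mult)
    then have "PHI F (q * dderiv p) = PHI F (dderiv (q * p)) - PHI F (dderiv q * p)"
      by (simp add: PHI_diff)
    also have "\<dots> = 0" using PHI_dderiv[OF EF] p by (simp add: JJ_def)
    finally show "PHI F (q * dderiv p) = 0" .
  qed
qed

lemma xm_JJ:
  assumes keysF: "\<And>e. e \<in> Poly_Mapping.keys F \<Longrightarrow> Poly_Mapping.lookup e 0 < m"
  shows "(dvar 0 :: 'a::comm_ring_1 dpoly) ^ m \<in> JJ F"
  unfolding JJ_def
proof (intro CollectI allI)
  fix q :: "'a dpoly"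
  have "q * dvar 0 ^ m = (\<Sum>e\<in>Poly_Mapping.keys q. Poly_Mapping.single e (Poly_Mapping.lookup q e)) * XX (Poly_Mapping.single 0 m)"
    by (simp add: dvar_power sum_single_pm[symmetric])
  also have "\<dots> = (\<Sum>e\<in>Poly_Mapping.keys q. Poly_Mapping.single (e + Poly_Mapping.single 0 m) (Poly_Mapping.lookup q e))"
    by (simp add: sum_distrib_right mult_single)
  finally have eq: "q * dvar 0 ^ m = \<dots>" .
  have "PHI F (q * dvar 0 ^ m) = (\<Sum>e\<in>Poly_Mapping.keys q. Poly_Mapping.lookup q e * phi F (e + Poly_Mapping.single 0 m))"
    unfolding eq PHI_sum PHI_single ..
  also have "\<dots> = 0"
  proof (rule sum.neutral, rule ballI)
    fix e
    have "e + Poly_Mapping.single 0 m \<notin> Poly_Mapping.keys F"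
      using keysF[of "e + Poly_Mapping.single 0 m"] by (auto simp: lookup_add)
    then show "Poly_Mapping.lookup q e * phi F (e + Poly_Mapping.single 0 m) = 0"
      by (simp add: phi_def in_keys_iff)
  qed
  finally show "PHI F (q * dvar 0 ^ m) = 0" .
qed

theorem lower:
  fixes m i :: nat
  assumes m: "0 < m"
  shows "(dvar i :: 'a::field_char_0 dpoly) ^ ((m - 1) * Suc i) \<notin> JJ (FF (Suc i) m :: 'a dpoly)
     \<and> is_diff_ideal (JJ (FF (Suc i) m :: 'a dpoly)) \<and> (dvar 0 :: 'a dpoly) ^ m \<in> JJ (FF (Suc i) m)"
proof (intro conjI)
  let ?F = "FF (Suc i) m :: 'a dpoly"
  show "is_diff_ideal (JJ ?F)" by (rule JJ_diff[OF EE_FF])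
  show "(dvar 0 :: 'a dpoly) ^ m \<in> JJ ?F"
  proof (rule xm_JJ)
    fix e assume "e \<in> Poly_Mapping.keys ?F"
    from keys_FF[OF this] m show "Poly_Mapping.lookup e 0 < m" by simp
  qed
  show "(dvar i :: 'a dpoly) ^ ((m - 1) * Suc i) \<notin> JJ ?F"
  proof
    assume "(dvar i :: 'a dpoly) ^ ((m - 1) * Suc i) \<in> JJ ?F"
    then have "PHI ?F (1 * XX (Poly_Mapping.single i ((m - 1) * Suc i))) = 0"
      unfolding JJ_def dvar_power by blast
    then have "phi ?F (Poly_Mapping.single i ((m - 1) * Suc i)) = 0" by (simp add: PHI_single)
    moreover have "mfact (Poly_Mapping.single i ((m - 1) * Suc i)) = fact ((m - 1) * Suc i)"
      by (cases "(m - 1) * Suc i = 0") (simp_all add: mfact_def)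
    moreover have "Poly_Mapping.lookup ?F (Poly_Mapping.single i ((m - 1) * Suc i)) \<noteq> 0"
      by (rule FF_coef) simp
    ultimately show False by (simp add: phi_def)
  qed
qed




theorem theorem3:
  fixes m i :: nat
  assumes "0 < m"
  shows "0 < (i + 1) * m - i
       \<and> (dvar i :: 'a::field_char_0 dpoly) ^ ((i + 1) * m - i) \<in> diff_ideal_gen {dvar 0 ^ m}
       \<and> (\<forall>j::nat. 0 < j \<and> j < (i + 1) * m - i \<longrightarrow>
            (dvar i :: 'a dpoly) ^ j \<notin> diff_ideal_gen {dvar 0 ^ m})"
proof (intro conjI allI impI)
  obtain m' where m': "m = Suc m'" using assms by (cases m) auto
  have N: "(i + 1) * m - i = Suc ((m - 1) * Suc i)" unfolding m' by (simp add: algebra_simps)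
  show "0 < (i + 1) * m - i" unfolding N by simp
  show "(dvar i :: 'a::field_char_0 dpoly) ^ ((i + 1) * m - i) \<in> diff_ideal_gen {dvar 0 ^ m}"
    unfolding diff_ideal_gen_def using upper[OF _ _ assms] by blast
  fix j :: nat assume j: "0 < j \<and> j < (i + 1) * m - i"
  show "(dvar i :: 'a dpoly) ^ j \<notin> diff_ideal_gen {dvar 0 ^ m}"
  proof
    assume jin: "(dvar i :: 'a dpoly) ^ j \<in> diff_ideal_gen {dvar 0 ^ m}"
    let ?J = "JJ (FF (Suc i) m :: 'a dpoly)"
    note L = lower[OF assms, of i, where 'a = 'a]
    have "(dvar i :: 'a dpoly) ^ j \<in> ?J" using jin L unfolding diff_ideal_gen_def by blast
    then have "(dvar i :: 'a dpoly) ^ ((m - 1) * Suc i - j) * (dvar i :: 'a dpoly) ^ j \<in> ?J"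
      using L unfolding is_diff_ideal_def by blast
    moreover have "(m - 1) * Suc i - j + j = (m - 1) * Suc i" using j N by linarith
    ultimately have "(dvar i :: 'a dpoly) ^ ((m - 1) * Suc i) \<in> ?J" by (metis power_add)
    with L show False by blast
  qed
qed



end
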